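(* Let $F$ be the elementary cellular automaton with rule number 7. For every nonempty finite word $u\in\{0,1\}^*$, the deterministic communication complexity of $\textsc{SInv}_{F,u}$ restricted to inputs of length $n$ is bounded by a constant independent of $n$.
   Context: An elementary cellular automaton (ECA) with rule number $N\in\{0,\dots,255\}$ is the map $F:\{0,1\}^{\mathbb Z}\to\{0,1\}^{\mathbb Z}$ given by $F(x)_i=f(x_{i-1},x_i,x_{i+1})$. Here the local rule $f:\{0,1\}^3\to\{0,1\}$ is determined by $N=\sum_{a,b,c\in\{0,1\}}2^{4a+2b+c}f(a,b,c)$. For a nonempty finite word $u$, $p_u\in\{0,1\}^{\mathbb Z}$ is defined by $(p_u)_i=u_{i\bmod |u|}$. For a finite word $x$, $p_u[x]$ is the configuration equal to $x$ on positions $0,\dots,|x|-1$ and to $p_u$ elsewhere. $\textsc{SInv}_{F,u}$ is the decision problem: on input a finite word $x$, decide whether there is an integer $w$ such that for all $t\ge0$ the set of positions where $F^t(p_u)$ and $F^t(p_u[x])$ differ is contained in an interval of length $w$. For each $n$, it is regarded as a function $\{0,1\}^n\to\{0,1\}$. For a function $g:X\times Y\to Z$, $D(g)$ is the minimal depth of a deterministic two-party protocol computing $g$. In such a protocol, Alice knows $x$ and Bob knows $y$. The protocol is a binary tree: each internal node is labelled by a function of Alice's input only or of Bob's input only, with values in $\{\text{left},\text{right}\}$, and each leaf is labelled by an output value. For $g:\{0,1\}^m\to Z$, set $D(g)=\max_{0\le i<m}D(g_i)$, where $g_i:\{0,1\}^i\times\{0,1\}^{m-i}\to Z$ is $g_i(x,y)=g(xy)$.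 *)

theory Defs
  imports Main
begin

type_synonym config = "int \<Rightarrow> bool"

definition eca_local :: "nat \<Rightarrow> bool \<Rightarrow> bool \<Rightarrow> bool \<Rightarrow> bool" where
  "eca_local N a b c = odd (N div 2 ^ (4 * of_bool a + 2 * of_bool b + of_bool c))"

definition eca :: "nat \<Rightarrow> config \<Rightarrow> config" where
  "eca N x = (\<lambda>i. eca_local N (x (i - 1)) (x i) (x (i + 1)))"

definition per :: "bool list \<Rightarrow> config" where
  "per u = (\<lambda>i. u ! nat (i mod int (length u)))"

definition patch :: "bool list \<Rightarrow> bool list \<Rightarrow> config" where
  "patch u x = (\<lambda>i. if 0 \<le> i \<and> i < int (length x) then x ! nat i else per u i)"

definition SInv :: "nat \<Rightarrow> bool list \<Rightarrow> bool list \<Rightarrow> bool" where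
  "SInv N u x = (\<exists>w::int. \<forall>t::nat. \<exists>a::int.
      {i. (eca N ^^ t) (per u) i \<noteq> (eca N ^^ t) (patch u x) i} \<subseteq> {a..a + w})"

datatype 'z protocol =
    Leaf 'z
  | Alice "bool list \<Rightarrow> bool" "'z protocol" "'z protocol"
  | Bob "bool list \<Rightarrow> bool" "'z protocol" "'z protocol"

fun run :: "'z protocol \<Rightarrow> bool list \<Rightarrow> bool list \<Rightarrow> 'z" where
  "run (Leaf z) x y = z"
| "run (Alice f l r) x y = (if f x then run r x y else run l x y)"
| "run (Bob f l r) x y = (if f y then run r x y else run l x y)"

fun depth :: "'z protocol \<Rightarrow> nat" where
  "depth (Leaf z) = 0"
| "depth (Alice f l r) = Suc (max (depth l) (depth r))"
| "depth (Bob f l r) = Suc (max (depth l) (depth r))"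

definition D_split :: "nat \<Rightarrow> nat \<Rightarrow> (bool list \<Rightarrow> 'z) \<Rightarrow> nat" where
  "D_split m i g = (LEAST d. \<exists>P::'z protocol. depth P = d \<and>
     (\<forall>x y. length x = i \<longrightarrow> length y = m - i \<longrightarrow> run P x y = g (x @ y)))"

text \<open>D(g) = max over 0 \<le> i < m of D(g_i) (0 when m = 0).\<close>
definition D :: "nat \<Rightarrow> (bool list \<Rightarrow> 'z) \<Rightarrow> nat" where
  "D m g = Sup ((\<lambda>i. D_split m i g) ` {..<m})"

end

theory Submission
  imports Defs
begin

lemma G_simp: "eca 7 x i = (\<not> x (i-1) \<and> \<not> (x i \<and> x (i+1)))"
  by (cases "x (i-1)"; cases "x i"; cases "x (i+1)"; simp add: eca_def eca_local_def)

definition Tr :: "config \<Rightarrow> int \<Rightarrow> bool" where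
  "Tr y i = (y (i-2) \<noteq> y (i-1) \<and> y (i-1) \<noteq> y i)"

lemma shift: "\<not> Tr (eca 7 x) i \<Longrightarrow> eca 7 (eca 7 (eca 7 x)) i = eca 7 x (i - 1)"
  unfolding Tr_def G_simp apply (simp add: algebra_simps) by argo

lemma T2: "Tr (eca 7 (eca 7 (eca 7 x))) i \<Longrightarrow> Tr (eca 7 x) (i-1) \<and> Tr (eca 7 x) (i-2)"
  unfolding Tr_def G_simp apply (simp add: algebra_simps) by argo

lemma no1001: "eca 7 x (L-2) \<Longrightarrow> \<not> eca 7 x (L-1) \<Longrightarrow> \<not> eca 7 x L \<Longrightarrow> eca 7 x (L+1) \<Longrightarrow> False"
  unfolding G_simp by (simp add: algebra_simps)

definition alt :: "config \<Rightarrow> bool" where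
  "alt z = (\<forall>i. z i \<noteq> z (i+1))"

lemma alt_prev: assumes "alt z" shows "z (i-1) = (\<not> z i)"
proof -
  have "z (i-1) \<noteq> z (i-1+1)" using assms unfolding alt_def by blast
  then show ?thesis by simp
qed

lemma alt_next: "alt z \<Longrightarrow> z (i+1) = (\<not> z i)"
  unfolding alt_def by blast

lemma alt_pre: assumes "alt (eca 7 x)" shows "alt x"
proof -
  have key: "x (i-1) = (\<not> eca 7 x i)" for i
  proof (cases "eca 7 x i")
    case True then show ?thesis by (simp add: G_simp)
  next
    case False
    then have "eca 7 x (i+1)" using assms alt_next by blast
    then have "\<not> x i" by (simp add: G_simp)
    with False show ?thesis by (simp add: G_simp)
  qed
  show ?thesis unfolding alt_def
  proof
    fix i
    have "x i = (\<not> eca 7 x (i+1))" using key[of "i+1"] by simp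
    moreover have "x (i+1) = (\<not> eca 7 x (i+2))" using key[of "i+2"] by (simp add: add.commute)
    moreover have "eca 7 x (i+1) \<noteq> eca 7 x (i+1+1)" using assms unfolding alt_def by blast
    moreover have "i+1+1 = i+2" by simp
    ultimately show "x i \<noteq> x (i+1)" by simp
  qed
qed

lemma alt_pre_iter: "alt ((eca 7 ^^ s) x) \<Longrightarrow> alt x"
  by (induction s) (auto dest: alt_pre)

lemma alt_fix: "alt z \<Longrightarrow> eca 7 z = z"
  by (rule ext) (simp add: G_simp alt_prev alt_next)

lemma alt_fix_iter: "alt z \<Longrightarrow> (eca 7 ^^ t) z = z"
  by (induction t) (auto simp: alt_fix)

lemma per_period: "u \<noteq> [] \<Longrightarrow> per u (i + int (length u)) = per u i"
  unfolding per_def by simp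

lemma G_period: assumes "\<forall>i. z (i + m) = z i" shows "eca 7 z (i + m) = eca 7 z i"
proof -
  have "z (i+m-1) = z (i-1)" using assms[rule_format, of "i-1"] by (simp add: algebra_simps)
  moreover have "z (i+m+1) = z (i+1)" using assms[rule_format, of "i+1"] by (simp add: algebra_simps)
  moreover have "z (i+m) = z i" using assms by simp
  ultimately show ?thesis by (simp add: G_simp)
qed

lemma iter_period: "\<forall>i. z (i + m) = z i \<Longrightarrow> \<forall>i. (eca 7 ^^ t) z (i + m) = (eca 7 ^^ t) z i"
proof (induction t)
  case 0 then show ?case by simp
next
  case (Suc t) then show ?case using G_period[OF Suc.IH[OF Suc.prems]] by simp
qed

lemma period_nat: fixes z :: "int \<Rightarrow> 'a" and m :: int assumes "\<forall>i. z (i + m) = z i" shows "z (i + m * int k) = z i"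
proof (induction k)
  case 0 then show ?case by simp
next
  case (Suc k)
  have "z (i + m * int (Suc k)) = z ((i + m * int k) + m)" by (simp add: algebra_simps)
  also have "\<dots> = z (i + m * int k)" using assms by simp
  finally show ?case using Suc by simp
qed

lemma period_int: fixes z :: "int \<Rightarrow> 'a" and m q :: int assumes "\<forall>i. z (i + m) = z i" shows "z (i + m * q) = z i"
proof (cases "q \<ge> 0")
  case True
  define k where "k = nat q"
  have "q = int k" using True k_def by simp
  then show ?thesis using period_nat[OF assms] by simp
next
  case False
  define k where "k = nat (- q)"
  have k: "q = - int k" using False k_def by simp
  have "z ((i + m * q) + m * int k) = z (i + m * q)" using period_nat[OF assms] by simp
  then show ?thesis using k by (simp add: algebra_simps)
qed

lemma alt_from_window:
  assumes per: "\<forall>i. z (i + m) = z i" and m: "m > 0"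
    and win: "\<forall>k. a \<le> k \<and> k < a + m \<longrightarrow> z k \<noteq> z (k+1)"
  shows "alt z"
  unfolding alt_def
proof
  fix i
  define r where "r = (i - a) mod m"
  define q where "q = (i - a) div m"
  have i: "i = (a + r) + m * q" unfolding r_def q_def by (simp add: algebra_simps)
  have r: "0 \<le> r" "r < m" unfolding r_def using m by auto
  have "z i = z (a + r)" using i period_int[OF per, of "a+r" q] by simp
  moreover have "z (i+1) = z (a + r + 1)"
    using period_int[OF per, of "a+r+1" q] i by (simp add: algebra_simps)
  moreover have "z (a+r) \<noteq> z (a+r+1)" using win r by auto
  ultimately show "z i \<noteq> z (i+1)" by simp
qed

lemma light_cone:
  assumes "\<forall>i. (i < 0 \<or> i \<ge> int n) \<longrightarrow> a i = b i"
  shows "\<forall>i. (i < - int t \<or> i \<ge> int n + int t) \<longrightarrow> (eca 7 ^^ t) a i = (eca 7 ^^ t) b i"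
proof (induction t)
  case 0 then show ?case using assms by simp
next
  case (Suc t)
  show ?case
  proof (intro allI impI)
    fix i assume h: "i < - int (Suc t) \<or> i \<ge> int n + int (Suc t)"
    have "(i-1) < - int t \<or> (i-1) \<ge> int n + int t" using h by auto
    moreover have "i < - int t \<or> i \<ge> int n + int t" using h by auto
    moreover have "(i+1) < - int t \<or> (i+1) \<ge> int n + int t" using h by auto
    ultimately have "(eca 7 ^^ t) a (i-1) = (eca 7 ^^ t) b (i-1)"
        "(eca 7 ^^ t) a i = (eca 7 ^^ t) b i" "(eca 7 ^^ t) a (i+1) = (eca 7 ^^ t) b (i+1)"
      using Suc.IH by blast+
    then show "(eca 7 ^^ Suc t) a i = (eca 7 ^^ Suc t) b i"
      by (simp only: funpow.simps comp_apply G_simp[of "(eca 7 ^^ t) a"] G_simp[of "(eca 7 ^^ t) b"])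
  qed
qed

lemma patch_out: "i < 0 \<or> i \<ge> int (length x) \<Longrightarrow> patch u x i = per u i"
  unfolding patch_def by auto

lemma patch_out_all: "\<forall>i. (i < 0 \<or> i \<ge> int (length x)) \<longrightarrow> patch u x i = per u i"
  using patch_out by blast

lemma iter_Suc: "(eca 7 ^^ Suc d) c = eca 7 ((eca 7 ^^ d) c)" by simp

lemma Tk_gen:
  assumes "s \<ge> 1"
  shows "Tr ((eca 7 ^^ (s + 2*k)) c) i \<Longrightarrow> i - 2 * int k \<le> j \<Longrightarrow> j \<le> i - int k
     \<Longrightarrow> Tr ((eca 7 ^^ s) c) j"
proof (induction k arbitrary: i j)
  case 0 then show ?case by simp
next
  case (Suc k)
  obtain d where d: "s + 2*k = Suc d" using assms by (metis add_gr_0 less_le_trans zero_less_one gr0_conv_Suc)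
  have e: "(eca 7 ^^ (s + 2 * Suc k)) c = eca 7 (eca 7 (eca 7 ((eca 7 ^^ d) c)))"
  proof -
    have "s + 2 * Suc k = Suc (Suc (Suc d))" using d by simp
    then show ?thesis by simp
  qed
  have e2: "(eca 7 ^^ (s + 2*k)) c = eca 7 ((eca 7 ^^ d) c)" using d by simp
  from Suc.prems(1) e have "Tr (eca 7 (eca 7 (eca 7 ((eca 7 ^^ d) c)))) i" by simp
  from T2[OF this] e2 have h1: "Tr ((eca 7 ^^ (s + 2*k)) c) (i-1)" and h2: "Tr ((eca 7 ^^ (s + 2*k)) c) (i-2)"
    by simp_all
  show ?case
  proof (cases "j \<ge> i - 1 - 2 * int k")
    case True
    then show ?thesis using Suc.IH[OF h1] Suc.prems by simp
  next
    case False
    then show ?thesis using Suc.IH[OF h2] Suc.prems by simp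
  qed
qed

lemma nonalt_SInv:
  assumes u: "u \<noteq> []" and na: "\<not> alt (per u)"
  shows "SInv 7 u x"
proof -
  define m where "m = int (length u)"
  have m0: "m > 0" using u unfolding m_def by simp
  define N where "N = int (length x)"
  define b where "b t = (eca 7 ^^ t) (per u)" for t
  define y where "y t = (eca 7 ^^ t) (patch u x)" for t
  have lc: "(i < - int t \<or> i \<ge> N + int t) \<Longrightarrow> y t i = b t i" for t i
    using light_cone[OF patch_out_all[of x u], of t] unfolding y_def b_def N_def by blast
  have bper: "\<forall>i. b t (i + m) = b t i" for t
    unfolding b_def m_def using iter_period per_period[OF u] by blast
  have bna: "\<not> alt (b t)" for t using alt_pre_iter na unfolding b_def by blast
  have winb: "\<exists>j. a \<le> j \<and> j \<le> a + m \<and> \<not> Tr (b t) j" for t a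
  proof (rule ccontr)
    assume "\<not> ?thesis"
    then have all: "\<forall>j. a \<le> j \<and> j \<le> a + m \<longrightarrow> Tr (b t) j" by blast
    have "\<forall>k. a - 2 \<le> k \<and> k < a - 2 + m \<longrightarrow> b t k \<noteq> b t (k+1)"
    proof (intro allI impI)
      fix k assume "a - 2 \<le> k \<and> k < a - 2 + m"
      then have "Tr (b t) (k+2)" using all by auto
      then have "b t (k+2-2) \<noteq> b t (k+2-1)" unfolding Tr_def by blast
      moreover have "k+2-2 = k" "k+2-1 = k+1" by simp_all
      ultimately show "b t k \<noteq> b t (k+1)" by metis
    qed
    then have "alt (b t)" using alt_from_window[OF bper m0] by blast
    then show False using bna by blast
  qed
  define K where "K t = N + 2 * int t + 2 * m + 10" for t
  have winy: "\<exists>j. a \<le> j \<and> j \<le> a + K t \<and> \<not> Tr (y t) j" for t a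
  proof (cases "a + m \<le> - int t - 1")
    case True
    obtain j where j: "a \<le> j" "j \<le> a + m" "\<not> Tr (b t) j" using winb by blast
    have "y t j = b t j" "y t (j-1) = b t (j-1)" "y t (j-2) = b t (j-2)" using lc j True by auto
    then have "\<not> Tr (y t) j" using j unfolding Tr_def by simp
    moreover have "j \<le> a + K t" using j unfolding K_def using m0 N_def by auto
    ultimately show ?thesis using j by blast
  next
    case False
    obtain j where j: "a + K t - m \<le> j" "j \<le> a + K t - m + m" "\<not> Tr (b t) j" using winb by blast
    have "j - 2 \<ge> N + int t" using j False unfolding K_def by auto
    then have "y t j = b t j" "y t (j-1) = b t (j-1)" "y t (j-2) = b t (j-2)" using lc by auto
    then have "\<not> Tr (y t) j" using j unfolding Tr_def by simp
    moreover have "a \<le> j" using j m0 False unfolding K_def N_def by auto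
    ultimately show ?thesis using j by auto
  qed
  have winb': "\<exists>j. a \<le> j \<and> j \<le> a + K t \<and> \<not> Tr (b t) j" for t a
  proof -
    obtain j where "a \<le> j" "j \<le> a + m" "\<not> Tr (b t) j" using winb by blast
    moreover have "m \<le> K t" unfolding K_def N_def using m0 by auto
    ultimately show ?thesis by force
  qed
  define k0 where "k0 = nat (K 2)"
  define T1 where "T1 = 1 + 2 * k0"
  have notr: "\<not> Tr (y t) i \<and> \<not> Tr (b t) i" if t: "t \<ge> T1" for t i
  proof -
    define s where "s = 1 + (t - 1) mod 2"
    define k where "k = (t - 1) div 2"
    have ts: "t = s + 2 * k" using t unfolding s_def k_def T1_def by simp
    have s1: "s \<ge> 1" "s \<le> 2" unfolding s_def by auto
    have kk: "int k \<ge> K s"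
    proof -
      have "k \<ge> k0" using t unfolding k_def T1_def by simp
      moreover have "K s \<le> K 2" using s1 unfolding K_def by simp
      moreover have "K 2 \<ge> 0" unfolding K_def N_def using m0 by simp
      ultimately show ?thesis unfolding k0_def by linarith
    qed
    have A: "\<not> Tr (y t) i"
    proof
      assume "Tr (y t) i"
      then have hh: "Tr ((eca 7 ^^ (s + 2*k)) (patch u x)) i" using ts unfolding y_def by simp
      obtain j where j: "i - 2*int k \<le> j" "j \<le> i - 2*int k + K s" "\<not> Tr (y s) j" using winy by blast
      have "Tr ((eca 7 ^^ s) (patch u x)) j" using Tk_gen[OF s1(1) hh] j kk by simp
      then show False using j unfolding y_def by simp
    qed
    have B: "\<not> Tr (b t) i"
    proof
      assume "Tr (b t) i"
      then have hh: "Tr ((eca 7 ^^ (s + 2*k)) (per u)) i" using ts unfolding b_def by simp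
      obtain j where j: "i - 2*int k \<le> j" "j \<le> i - 2*int k + K s" "\<not> Tr (b s) j" using winb' by blast
      have "Tr ((eca 7 ^^ s) (per u)) j" using Tk_gen[OF s1(1) hh] j kk by simp
      then show False using j unfolding b_def by simp
    qed
    show ?thesis using A B by blast
  qed
  have shy: "y (t+2) i = y t (i-1) \<and> b (t+2) i = b t (i-1)" if t: "t \<ge> T1" for t i
  proof -
    obtain d where d: "t = Suc d" using t unfolding T1_def by (metis Suc_eq_plus1_left Suc_le_D add_leD1)
    have "y t = eca 7 (y d)" "b t = eca 7 (b d)" unfolding y_def b_def d by simp_all
    moreover have "y (t+2) = eca 7 (eca 7 (eca 7 (y d)))" "b (t+2) = eca 7 (eca 7 (eca 7 (b d)))"
      unfolding y_def b_def d by simp_all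
    ultimately show ?thesis using shift notr[OF t, of i] by metis
  qed
  have dsh: "b (t0 + 2*k) i \<noteq> y (t0 + 2*k) i \<Longrightarrow> b t0 (i - int k) \<noteq> y t0 (i - int k)"
    if t0: "t0 \<ge> T1" for t0 k i
  proof (induction k arbitrary: i)
    case 0 then show ?case by simp
  next
    case (Suc k)
    have eq: "t0 + 2 * Suc k = (t0 + 2*k) + 2" by simp
    have "T1 \<le> t0 + 2*k" using t0 by simp
    from shy[OF this, of i] have "b (t0 + 2*k) (i-1) \<noteq> y (t0 + 2*k) (i-1)"
      using Suc.prems eq by metis
    then have "b t0 (i - 1 - int k) \<noteq> y t0 (i - 1 - int k)" using Suc.IH by blast
    then show ?case by (simp add: algebra_simps)
  qed
  have lc': "b t i \<noteq> y t i \<Longrightarrow> - int t \<le> i \<and> i < N + int t" for t i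
    using lc[of i t] by (metis linorder_not_le)
  show ?thesis unfolding SInv_def
  proof (rule exI[where x="N + 2 * int T1 + 6"], rule allI)
    fix t
    show "\<exists>a. {i. (eca 7 ^^ t) (per u) i \<noteq> (eca 7 ^^ t) (patch u x) i} \<subseteq> {a..a + (N + 2 * int T1 + 6)}"
    proof (cases "t < T1 + 2")
      case True
      have "{i. (eca 7 ^^ t) (per u) i \<noteq> (eca 7 ^^ t) (patch u x) i} \<subseteq> {- int t .. - int t + (N + 2 * int T1 + 6)}"
      proof
        fix i assume "i \<in> {i. (eca 7 ^^ t) (per u) i \<noteq> (eca 7 ^^ t) (patch u x) i}"
        then have "b t i \<noteq> y t i" unfolding b_def y_def by simp
        from lc'[OF this] True show "i \<in> {- int t .. - int t + (N + 2 * int T1 + 6)}" by auto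
      qed
      then show ?thesis by blast
    next
      case False
      define t0 where "t0 = T1 + (t - T1) mod 2"
      define k where "k = (t - T1) div 2"
      have tt: "t = t0 + 2*k" using False unfolding t0_def k_def by simp
      have t0: "t0 \<ge> T1" "t0 \<le> T1 + 1" unfolding t0_def by auto
      have "{i. (eca 7 ^^ t) (per u) i \<noteq> (eca 7 ^^ t) (patch u x) i} \<subseteq> {- int t0 + int k .. - int t0 + int k + (N + 2 * int T1 + 6)}"
      proof
        fix i assume "i \<in> {i. (eca 7 ^^ t) (per u) i \<noteq> (eca 7 ^^ t) (patch u x) i}"
        then have "b (t0 + 2*k) i \<noteq> y (t0 + 2*k) i" unfolding b_def y_def tt by simp
        from lc'[OF dsh[OF t0(1) this]] t0 show "i \<in> {- int t0 + int k .. - int t0 + int k + (N + 2 * int T1 + 6)}"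
          by auto
      qed
      then show ?thesis by blast
    qed
  qed
qed

lemma front_step:
  assumes al: "alt p" and r: "\<forall>j>r. q j = p j" and d: "q r \<noteq> p r"
  shows "eca 7 q (r+1) \<noteq> p (r+1) \<and> (\<forall>j>r+1. eca 7 q j = p j)"
proof
  have "q (r+1) = p (r+1)" "q (r+1+1) = p (r+1+1)" using r by auto
  moreover have "p (r+1) = (\<not> p r)" "p (r+1+1) = (\<not> p (r+1))" using al alt_next by blast+
  ultimately show "eca 7 q (r+1) \<noteq> p (r+1)" using d by (simp add: G_simp)
next
  show "\<forall>j>r+1. eca 7 q j = p j"
  proof (intro allI impI)
    fix j assume "j > r+1"
    then have "q (j-1) = p (j-1)" "q j = p j" "q (j+1) = p (j+1)" using r by auto
    then have "eca 7 q j = eca 7 p j" by (simp add: G_simp)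
    also have "\<dots> = p j" using alt_fix[OF al] by simp
    finally show "eca 7 q j = p j" .
  qed
qed

definition St :: "config \<Rightarrow> config \<Rightarrow> int \<Rightarrow> bool" where
  "St p q L = ((\<forall>j<L. q j = p j) \<and> q L \<noteq> p L \<and> (q L \<or> \<not> q (L+1)))"

lemma far_equal:
  assumes al: "alt p" and h: "\<forall>j<L. q j = p j" and j: "j + 1 < L"
  shows "eca 7 q j = p j"
proof -
  have "q (j-1) = p (j-1)" "q j = p j" "q (j+1) = p (j+1)" using h j by auto
  then have "eca 7 q j = eca 7 p j" by (simp add: G_simp)
  also have "\<dots> = p j" using alt_fix[OF al] by simp
  finally show ?thesis .
qed

lemma left_step:
  assumes al: "alt p" and S: "St p q L" and b1: "q L \<Longrightarrow> L \<le> B + 1" and b0: "\<not> q L \<Longrightarrow> L \<le> B"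
  shows "\<exists>L'. St p (eca 7 q) L' \<and> (eca 7 q L' \<longrightarrow> L' \<le> B + 1) \<and> (\<not> eca 7 q L' \<longrightarrow> L' \<le> B)"
proof -
  have h: "\<forall>j<L. q j = p j" and d: "q L \<noteq> p L" and c: "q L \<or> \<not> q (L+1)"
    using S unfolding St_def by auto
  have pm1: "p (L-1) = (\<not> p L)" and pm2: "p (L-1-1) = (\<not> p (L-1))" and pp1: "p (L+1) = (\<not> p L)"
    using al alt_prev alt_next by blast+
  have qm1: "q (L-1) = p (L-1)" and qm2: "q (L-1-1) = p (L-1-1)" using h by auto
  show ?thesis
  proof (cases "q L")
    case True
    have "p L = False" using d True by simp
    have g1: "eca 7 q (L-1) = False" using True qm1 pm1 \<open>p L = False\<close>
      by (simp add: G_simp)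
    have g0: "eca 7 q L = False" using qm1 pm1 \<open>p L = False\<close> by (simp add: G_simp)
    have "St p (eca 7 q) (L-1)" unfolding St_def
    proof (intro conjI allI impI)
      fix j assume "j < L - 1" then show "eca 7 q j = p j" using far_equal[OF al h] by simp
    next
      show "eca 7 q (L-1) \<noteq> p (L-1)" using g1 pm1 \<open>p L = False\<close> by simp
    next
      show "eca 7 q (L-1) \<or> \<not> eca 7 q (L-1+1)" using g0 by simp
    qed
    moreover have "L - 1 \<le> B" using b1 True by simp
    ultimately show ?thesis using g1 by blast
  next
    case False
    have pL: "p L = True" using d False by simp
    have nq1: "\<not> q (L+1)" using c False by simp
    have g1: "eca 7 q (L+1) = True" using False nq1 by (simp add: G_simp)
    have g0: "eca 7 q L = True" using False qm1 pm1 pL by (simp add: G_simp)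
    have gm: "eca 7 q (L-1) = False" using qm2 pm2 pm1 pL by (simp add: G_simp)
    have "St p (eca 7 q) (L+1)" unfolding St_def
    proof (intro conjI allI impI)
      fix j assume j: "j < L + 1"
      show "eca 7 q j = p j"
      proof -
        consider "j = L" | "j = L - 1" | "j + 1 < L" using j by linarith
        then show ?thesis
        proof cases
          case 1 then show ?thesis using g0 pL by simp
        next
          case 2 then show ?thesis using gm pm1 pL by simp
        next
          case 3 then show ?thesis using far_equal[OF al h] by simp
        qed
      qed
    next
      show "eca 7 q (L+1) \<noteq> p (L+1)" using g1 pp1 pL by simp
    next
      show "eca 7 q (L+1) \<or> \<not> eca 7 q (L+1+1)" using g1 by simp
    qed
    moreover have "L + 1 \<le> B + 1" using b0 False by simp
    ultimately show ?thesis using g1 by blast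
  qed
qed

lemma alt_SInv:
  assumes u: "u \<noteq> []" and al: "alt (per u)"
  shows "SInv 7 u x \<longleftrightarrow> (\<forall>k<length x. x!k = per u (int k))"
proof
  assume H: "\<forall>k<length x. x!k = per u (int k)"
  have "patch u x = per u"
  proof
    fix i show "patch u x i = per u i"
      unfolding patch_def using H by (cases "0 \<le> i \<and> i < int (length x)") auto
  qed
  then show "SInv 7 u x" unfolding SInv_def by auto
next
  assume S: "SInv 7 u x"
  show "\<forall>k<length x. x!k = per u (int k)"
  proof (rule ccontr)
    assume "\<not> ?thesis"
    then obtain k0 where k0: "k0 < length x" "x!k0 \<noteq> per u (int k0)" by blast
    define p where "p = per u"
    define y where "y t = (eca 7 ^^ t) (patch u x)" for t
    have pal: "alt p" using al p_def by simp
    have pfix: "(eca 7 ^^ t) p = p" for t using alt_fix_iter[OF pal] .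
    define S0 where "S0 = {i. 0 \<le> i \<and> i < int (length x) \<and> p i \<noteq> y 0 i}"
    have fin: "finite S0" unfolding S0_def by (rule finite_subset[of _ "{0..<int (length x)}"]) auto
    have "int k0 \<in> S0" unfolding S0_def y_def p_def patch_def using k0 by auto
    then have ne: "S0 \<noteq> {}" by blast
    define r0 where "r0 = Max S0"
    have r0in: "r0 \<in> S0" using fin ne r0_def by simp
    have f0: "p r0 \<noteq> y 0 r0" using r0in S0_def by simp
    have f0': "\<forall>j>r0. y 0 j = p j"
    proof (intro allI impI)
      fix j assume j: "j > r0"
      show "y 0 j = p j"
      proof (cases "0 \<le> j \<and> j < int (length x)")
        case True
        have "j \<notin> S0" using j fin r0_def Max_ge by (metis not_le)
        then show ?thesis using True S0_def by auto
      next
        case False then show ?thesis unfolding y_def p_def patch_def by auto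
      qed
    qed
    have front: "p (r0 + int t) \<noteq> y t (r0 + int t) \<and> (\<forall>j>r0 + int t. y t j = p j)" for t
    proof (induction t)
      case 0 then show ?case using f0 f0' by simp
    next
      case (Suc t)
      have ys: "y (Suc t) = eca 7 (y t)" unfolding y_def by simp
      have e: "r0 + int (Suc t) = (r0 + int t) + 1" by simp
      have "eca 7 (y t) (r0 + int t + 1) \<noteq> p (r0 + int t + 1) \<and> (\<forall>j>r0 + int t + 1. eca 7 (y t) j = p j)"
        using front_step[OF pal, of "r0 + int t" "y t"] Suc by metis
      then show ?case unfolding e ys by metis
    qed
    have lc: "\<forall>i. (i < - int t \<or> i \<ge> int (length x) + int t) \<longrightarrow> y t i = p i" for t
      using light_cone[OF patch_out_all[of x u], of t] pfix unfolding y_def p_def by metis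
    define D1 where "D1 = {i. -1 \<le> i \<and> i \<le> r0 + 1 \<and> p i \<noteq> y 1 i}"
    have fin1: "finite D1" unfolding D1_def by (rule finite_subset[of _ "{-1..r0+1}"]) auto
    have "r0 + 1 \<in> D1" unfolding D1_def using front[of 1] r0in S0_def by auto
    then have ne1: "D1 \<noteq> {}" by blast
    define L1 where "L1 = Min D1"
    have L1in: "L1 \<in> D1" using fin1 ne1 L1_def by simp
    have lt1: "\<forall>j<L1. y 1 j = p j"
    proof (intro allI impI)
      fix j assume j: "j < L1"
      show "y 1 j = p j"
      proof (cases "j < -1")
        case True then show ?thesis using lc[of 1] by auto
      next
        case False
        have "j \<le> r0 + 1" using j L1in D1_def by auto
        moreover have "j \<notin> D1" using j fin1 L1_def Min_le by (metis not_le)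
        ultimately show ?thesis using False D1_def by auto
      qed
    qed
    have St1: "St p (y 1) L1"
      unfolding St_def
    proof (intro conjI)
      show "\<forall>j<L1. y 1 j = p j" by (rule lt1)
      show "y 1 L1 \<noteq> p L1" using L1in D1_def by auto
      show "y 1 L1 \<or> \<not> y 1 (L1 + 1)"
      proof (rule ccontr)
        assume "\<not> (y 1 L1 \<or> \<not> y 1 (L1 + 1))"
        then have a: "\<not> y 1 L1" "y 1 (L1+1)" by auto
        have pL: "p L1" using a L1in D1_def by auto
        have "p (L1-1) = (\<not> p L1)" "p (L1-2) = (\<not> p (L1 - 1))"
          using alt_prev[OF pal, of L1] alt_prev[OF pal, of "L1-1"] by simp_all
        moreover have "y 1 (L1-1) = p (L1-1)" "y 1 (L1-2) = p (L1-2)" using lt1 by auto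
        moreover have "y 1 = eca 7 (y 0)" unfolding y_def by simp
        ultimately show False using no1001[of "y 0" L1] a pL by simp
      qed
    qed
    define B where "B = L1"
    have inv: "\<exists>L. St p (y (Suc d)) L \<and> (y (Suc d) L \<longrightarrow> L \<le> B + 1) \<and> (\<not> y (Suc d) L \<longrightarrow> L \<le> B)" for d
    proof (induction d)
      case 0 then show ?case using St1 B_def by auto
    next
      case (Suc d)
      then obtain L where L: "St p (y (Suc d)) L" "y (Suc d) L \<longrightarrow> L \<le> B + 1" "\<not> y (Suc d) L \<longrightarrow> L \<le> B"
        by blast
      have "y (Suc (Suc d)) = eca 7 (y (Suc d))" unfolding y_def by simp
      then show ?case using left_step[OF pal L(1)] L(2,3) by auto
    qed
    obtain w where w: "\<forall>t. \<exists>a. {i. (eca 7 ^^ t) (per u) i \<noteq> (eca 7 ^^ t) (patch u x) i} \<subseteq> {a..a + w}"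
      using S unfolding SInv_def by blast
    define t where "t = Suc (nat (w + B + 2 - r0))"
    obtain a where a: "{i. (eca 7 ^^ t) (per u) i \<noteq> (eca 7 ^^ t) (patch u x) i} \<subseteq> {a..a + w}"
      using w by blast
    have a': "p i \<noteq> y t i \<Longrightarrow> a \<le> i \<and> i \<le> a + w" for i
      using a pfix[of t] unfolding y_def p_def by auto
    obtain L where L: "St p (y t) L" "L \<le> B + 1"
      using inv[of "nat (w + B + 2 - r0)"] t_def by (cases "y t L") force+
    have "p L \<noteq> y t L" using L(1) St_def by auto
    then have "a \<le> L" using a' by blast
    moreover have "r0 + int t \<le> a + w" using a' front[of t] by blast
    moreover have "int t \<ge> w + B + 3 - r0" unfolding t_def by simp
    ultimately show False using L(2) by linarith
  qed
qed

lemma split_char: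
  assumes "length x = i" "length y = n - i" "i < n"
  shows "(\<forall>k<length (x @ y). (x @ y)!k = per u (int k)) \<longleftrightarrow>
    ((\<forall>k<length x. x!k = per u (int k)) \<and> (\<forall>k<length y. y!k = per u (int i + int k)))"
proof
  assume H: "\<forall>k<length (x @ y). (x @ y)!k = per u (int k)"
  show "(\<forall>k<length x. x!k = per u (int k)) \<and> (\<forall>k<length y. y!k = per u (int i + int k))"
  proof (intro conjI allI impI)
    fix k assume "k < length x" then show "x!k = per u (int k)" using H[rule_format, of k] by (simp add: nth_append)
  next
    fix k assume "k < length y"
    then show "y!k = per u (int i + int k)" using H[rule_format, of "i + k"] assms by (simp add: nth_append)
  qed
next
  assume H: "(\<forall>k<length x. x!k = per u (int k)) \<and> (\<forall>k<length y. y!k = per u (int i + int k))"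
  show "\<forall>k<length (x @ y). (x @ y)!k = per u (int k)"
  proof (intro allI impI)
    fix k assume k: "k < length (x @ y)"
    show "(x @ y)!k = per u (int k)"
    proof (cases "k < length x")
      case True then show ?thesis using H by (simp add: nth_append)
    next
      case False
      then have "k - i < length y" using k assms by simp
      then have "y ! (k - i) = per u (int i + int (k - i))" using H by blast
      then show ?thesis using False assms by (simp add: nth_append)
    qed
  qed
qed

lemma D_split_le:
  assumes u: "u \<noteq> []" and i: "i < n"
  shows "D_split n i (SInv 7 u) \<le> 2"
proof (cases "alt (per u)")
  case False
  have "\<exists>P::bool protocol. depth P = 0 \<and>
     (\<forall>x y. length x = i \<longrightarrow> length y = n - i \<longrightarrow> run P x y = SInv 7 u (x @ y))"
    by (rule exI[of _ "Leaf True"]) (simp add: nonalt_SInv[OF u False])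
  then show ?thesis unfolding D_split_def by (rule le_trans[OF Least_le]) simp
next
  case True
  define fA where "fA x = (\<forall>k<length x. x!k = per u (int k))" for x
  define fB where "fB y = (\<forall>k<length y. y!k = per u (int i + int k))" for y
  define P where "P = Alice fA (Leaf False) (Bob fB (Leaf False) (Leaf True))"
  have "depth P = 2 \<and>
     (\<forall>x y. length x = i \<longrightarrow> length y = n - i \<longrightarrow> run P x y = SInv 7 u (x @ y))"
  proof (intro conjI allI impI)
    show "depth P = 2" unfolding P_def by simp
  next
    fix x y :: "bool list" assume "length x = i" "length y = n - i"
    then have "SInv 7 u (x @ y) = (fA x \<and> fB y)"
      using alt_SInv[OF u True] split_char[of x i y n u] i unfolding fA_def fB_def by simp
    then show "run P x y = SInv 7 u (x @ y)" unfolding P_def by simp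
  qed
  then have "\<exists>P::bool protocol. depth P = 2 \<and>
     (\<forall>x y. length x = i \<longrightarrow> length y = n - i \<longrightarrow> run P x y = SInv 7 u (x @ y))" by blast
  then show ?thesis unfolding D_split_def by (rule Least_le)
qed

theorem mainTheorem4:
  fixes u :: "bool list"
  assumes "u \<noteq> []"
  shows "\<exists>c::nat. \<forall>n::nat. D n (SInv 7 u) \<le> c"
proof (rule exI[of _ 2], rule allI)
  fix n
  show "D n (SInv 7 u) \<le> 2"
  proof (cases "n = 0")
    case True then show ?thesis unfolding D_def by simp
  next
    case False
    then show ?thesis unfolding D_def
      by (intro cSup_least) (auto intro: D_split_le[OF assms])
  qed
qed

end
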